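(* Let $V=V(\alpha_1)\otimes\cdots\otimes V(\alpha_d)$ be a standard $U_q(\widehat{\mathfrak{sl}}_2)$-module with feasible diameter $d$. Then its Drinfel'd polynomial satisfies $$P_V=\prod_{i=1}^d P_{V(\alpha_i)}.$$
   Context: Let $\mathbb F$ be an algebraically closed field and fix nonzero $q\in\mathbb F$ with $q^2\ne1$; write $[n]_q=(q^n-q^{-n})/(q-q^{-1})$. $U_q(\widehat{\mathfrak{sl}}_2)$ is the associative unital $\mathbb F$-algebra with generators $e_i^{\pm},K_i^{\pm1}$ ($i\in\{0,1\}$) and relations $K_iK_i^{-1}=K_i^{-1}K_i=1$, $K_0K_1=K_1K_0$, $K_ie_i^{\pm}K_i^{-1}=q^{\pm2}e_i^{\pm}$, $K_ie_j^{\pm}K_i^{-1}=q^{\mp2}e_j^{\pm}$ ($i\ne j$), $e_i^+e_i^--e_i^-e_i^+=(K_i-K_i^{-1})/(q-q^{-1})$, $e_0^{\pm}e_1^{\mp}=e_1^{\mp}e_0^{\pm}$, and $(e_i^\pm)^3e_j^\pm-[3]_q(e_i^\pm)^2e_j^\pm e_i^\pm+[3]_qe_i^\pm e_j^\pm(e_i^\pm)^2-e_j^\pm(e_i^\pm)^3=0$ ($i\ne j$). Tensor products of modules are formed via $e_i^+(v\otimes w)=e_i^+v\otimes K_iw+v\otimes e_i^+w$, $e_i^-(v\otimes w)=e_i^-v\otimes w+K_i^{-1}v\otimes e_i^-w$, $K_i(v\otimes w)=K_iv\otimes K_iw$. For nonzero $\alpha\in\mathbb F$, $V(\alpha)$ is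 the module with basis $x,y$ and $K_1x=qx$, $K_1y=q^{-1}y$, $e_1^-x=y$, $e_1^-y=0$, $e_1^+x=0$, $e_1^+y=x$, $K_0x=q^{-1}x$, $K_0y=qy$, $e_0^-x=0$, $e_0^-y=q\alpha^{-1}x$, $e_0^+x=q^{-1}\alpha y$, $e_0^+y=0$. A standard module of diameter $d$ is $V(\alpha_1)\otimes\cdots\otimes V(\alpha_d)$ with all $\alpha_i\in\mathbb F$ nonzero (for $d=0$: the trivial module, on which each $e_i^\pm$ acts as $0$ and each $K_i^{\pm1}$ as $1$). An integer $d$ is feasible if $d\ge0$ and $q^{2i}\ne1$ for $1\le i\le d$. For a standard $V$ of diameter $d$, $U_0$ is the $1$-dimensional span of $x\otimes\cdots\otimes x$. Fix nonzero $b,c,b^*,c^*\in\mathbb F$ and $u,v,u^*,v^*\in\mathbb F$ with $uv^*=-bb^*q^{-1}(q-q^{-1})^2$ and $vu^*=-cc^*q^{-1}(q-q^{-1})^2$; set $R=ue_0^++ve_1^-K_1$ and $L=u^*e_1^++v^*e_0^-K_0$. For a standard module $V$ of feasible diameter $d$ and $0\le i\le d$, $\zeta_i$ is the scalar by which $L^iR^i$ acts on $U_0$, and $\sigma_i=\zeta_i/\prod_{k=1}^i(q^k-q^{-k})^2$. For $i\ge0$ let $f_i=bb^*q^{-2i}+cc^*q^{2i}-\lambda\in\mathbb F[\lambda]$. The Drinfel'd polynomial of $V$ is the monic degree-$d$ polynomial $P_V=(-1)^d\sum_{i=0}^d\sigma_{d-i}f_0f_1\cdots f_{i-1}$. *)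

theory Defs
  imports "HOL-Computational_Algebra.Polynomial"
begin

text \<open>Generators of U_q(sl2-hat) that we need: e_i^+, e_i^-, K_i, K_i^{-1}.\<close>
datatype gen = E0p | E0m | E1p | E1m | K0g | K1g | K0ig | K1ig

text \<open>Matrix of a generator on V(alpha) in the basis x (True), y (False):
  sgl q al g b b' is the coefficient of basis vector b' in g applied to b.\<close>
definition sgl :: "'a::field \<Rightarrow> 'a \<Rightarrow> gen \<Rightarrow> bool \<Rightarrow> bool \<Rightarrow> 'a" where
"sgl q al g b b' = (case g of
    K1g \<Rightarrow> if b = b' then (if b then q else inverse q) else 0
  | K1ig \<Rightarrow> if b = b' then (if b then inverse q else q) else 0
  | K0g \<Rightarrow> if b = b' then (if b then inverse q else q) else 0
  | K0ig \<Rightarrow> if b = b' then (if b then q else inverse q) else 0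
  | E1m \<Rightarrow> if b \<and> \<not> b' then 1 else 0
  | E1p \<Rightarrow> if \<not> b \<and> b' then 1 else 0
  | E0m \<Rightarrow> if \<not> b \<and> b' then q * inverse al else 0
  | E0p \<Rightarrow> if b \<and> \<not> b' then inverse q * al else 0)"

text \<open>The K-factor appearing in the coproduct of each e-generator.\<close>
fun kof :: "gen \<Rightarrow> gen" where
  "kof E0p = K0g" | "kof E1p = K1g" | "kof E0m = K0ig" | "kof E1m = K1ig" | "kof g = g"

text \<open>Matrix of a generator on V(a_1) \<otimes> ... \<otimes> V(a_d), basis indexed by bool lists of length d
  (tensor product via the given coproduct; V(a_1) \<otimes> (V(a_2) \<otimes> ...)).\<close>
fun tmat :: "'a::field \<Rightarrow> 'a list \<Rightarrow> gen \<Rightarrow> bool list \<Rightarrow> bool list \<Rightarrow> 'a" where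
  "tmat q [] g [] [] = (if g \<in> {K0g, K1g, K0ig, K1ig} then 1 else 0)"
| "tmat q (a # as) g (b # w) (b' # w') =
     (if g \<in> {E0p, E1p} then
        sgl q a g b b' * tmat q as (kof g) w w' + (if b = b' then 1 else 0) * tmat q as g w w'
      else if g \<in> {E0m, E1m} then
        sgl q a g b b' * (if w = w' \<and> length w = length as then 1 else 0)
          + sgl q a (kof g) b b' * tmat q as g w w'
      else sgl q a g b b' * tmat q as g w w')"
| "tmat q _ g _ _ = 0"

text \<open>Vectors of the standard module are coefficient functions on basis words of length d.\<close>
definition tapp :: "'a::field \<Rightarrow> 'a list \<Rightarrow> gen \<Rightarrow> (bool list \<Rightarrow> 'a) \<Rightarrow> (bool list \<Rightarrow> 'a)" where
"tapp q as g f = (\<lambda>w'. \<Sum>w\<in>{w. length w = length as}. f w * tmat q as g w w')"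

definition Rop :: "'a::field \<Rightarrow> 'a \<Rightarrow> 'a \<Rightarrow> 'a list \<Rightarrow> (bool list \<Rightarrow> 'a) \<Rightarrow> (bool list \<Rightarrow> 'a)" where
"Rop q u v as f = (\<lambda>w. u * tapp q as E0p f w + v * tapp q as E1m (tapp q as K1g f) w)"

definition Lop :: "'a::field \<Rightarrow> 'a \<Rightarrow> 'a \<Rightarrow> 'a list \<Rightarrow> (bool list \<Rightarrow> 'a) \<Rightarrow> (bool list \<Rightarrow> 'a)" where
"Lop q us vs as f = (\<lambda>w. us * tapp q as E1p f w + vs * tapp q as E0m (tapp q as K0g f) w)"

text \<open>The vector x \<otimes> ... \<otimes> x spanning U_0.\<close>
definition xvec :: "nat \<Rightarrow> bool list \<Rightarrow> 'a::field" where
"xvec d = (\<lambda>w. if w = replicate d True then 1 else 0)"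

text \<open>zeta_i: the scalar by which L^i R^i acts on U_0 (coefficient of x\<otimes>...\<otimes>x in L^i R^i (x\<otimes>...\<otimes>x)).\<close>
definition zeta :: "'a::field \<Rightarrow> 'a \<Rightarrow> 'a \<Rightarrow> 'a \<Rightarrow> 'a \<Rightarrow> 'a list \<Rightarrow> nat \<Rightarrow> 'a" where
"zeta q u v us vs as i =
   ((Lop q us vs as ^^ i) ((Rop q u v as ^^ i) (xvec (length as)))) (replicate (length as) True)"

definition sigma :: "'a::field \<Rightarrow> 'a \<Rightarrow> 'a \<Rightarrow> 'a \<Rightarrow> 'a \<Rightarrow> 'a list \<Rightarrow> nat \<Rightarrow> 'a" where
"sigma q u v us vs as i =
   zeta q u v us vs as i / (\<Prod>k=1..i. (q ^ k - inverse q ^ k)^2)"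

definition fpol :: "'a::field \<Rightarrow> 'a \<Rightarrow> 'a \<Rightarrow> 'a \<Rightarrow> 'a \<Rightarrow> nat \<Rightarrow> 'a poly" where
"fpol q b c bs cs i = [: b * bs * inverse q ^ (2*i) + c * cs * q ^ (2*i), -1 :]"

definition drinfeld ::
  "'a::field \<Rightarrow> 'a \<Rightarrow> 'a \<Rightarrow> 'a \<Rightarrow> 'a \<Rightarrow> 'a \<Rightarrow> 'a \<Rightarrow> 'a \<Rightarrow> 'a \<Rightarrow> 'a list \<Rightarrow> 'a poly" where
"drinfeld q b c bs cs u v us vs as =
   smult ((-1) ^ length as)
     (\<Sum>i=0..length as. smult (sigma q u v us vs as (length as - i)) (\<Prod>j<i. fpol q b c bs cs j))"

definition feasible :: "'a::field \<Rightarrow> nat \<Rightarrow> bool" where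
"feasible q d = (\<forall>i\<in>{1..d}. q ^ (2*i) \<noteq> 1)"

end

theory Submission
  imports Defs
begin

lemma pinv: "q \<noteq> 0 \<Longrightarrow> (q::'a::field)^(2*k) * inverse q^k = q^k"
  by (simp add: mult_2 power_add power_inverse)

lemma geo1: "(q::'a::field) \<noteq> 0 \<Longrightarrow> (q - inverse q) * (\<Sum>m<Suc j. q^(2*m)) * inverse q^j = q^(Suc j) - inverse q^(Suc j)"
proof (induction j)
  case 0 then show ?case by simp
next
  case (Suc j)
  have "(q - inverse q) * (\<Sum>m<Suc (Suc j). q^(2*m)) * inverse q^(Suc j)
      = inverse q * ((q - inverse q) * (\<Sum>m<Suc j. q^(2*m)) * inverse q^j) + (q - inverse q) * (q^(2*Suc j) * inverse q^(Suc j))"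
    by (simp add: algebra_simps)
  also have "\<dots> = inverse q * (q^(Suc j) - inverse q^(Suc j)) + (q - inverse q) * q^(Suc j)"
    by (simp only: Suc.IH[OF Suc.prems] pinv[OF Suc.prems])
  also have "\<dots> = q^(Suc (Suc j)) - inverse q^(Suc (Suc j))"
    using Suc.prems by (simp add: algebra_simps)
  finally show ?case .
qed

lemma geo2: "(q::'a::field) \<noteq> 0 \<Longrightarrow> (\<Sum>m<Suc j. inverse q^(2*m)) = (\<Sum>m<Suc j. q^(2*m)) * inverse q^(2*j)"
proof -
  assume q: "q \<noteq> 0"
  have "(\<Sum>m<Suc j. inverse q^(2*m)) = (\<Sum>m<Suc j. inverse q^(2*(Suc j - Suc m)))"
    by (rule sum.nat_diff_reindex[symmetric])
  also have "\<dots> = (\<Sum>m<Suc j. q^(2*m) * inverse q^(2*j))"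
  proof (rule sum.cong)
    fix m assume "m \<in> {..<Suc j}"
    then have "j = m + (j - m)" by simp
    then have e: "q^(2*j) = q^(2*m) * q^(2*(j-m))" by (metis add_mult_distrib2 power_add)
    have "q^(2*m) * inverse q^(2*j) = q^(2*m) * inverse (q^(2*m) * q^(2*(j-m)))"
      by (simp add: e power_inverse)
    also have "\<dots> = inverse q^(2*(j-m))" using q by (simp add: power_inverse)
    finally show "inverse q^(2*(Suc j - Suc m)) = q^(2*m) * inverse q^(2*j)" by simp
  qed simp
  finally show ?thesis by (simp only: sum_distrib_right)
qed


definition rrf :: "'a::field \<Rightarrow> 'a \<Rightarrow> 'a \<Rightarrow> 'a \<Rightarrow> nat \<Rightarrow> nat \<Rightarrow> 'a" where
"rrf q u v a n j = u * (inverse q * a) * (inverse q^n * q^(2*j)) + v * q * (q^n * inverse q^(2*j))"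

definition eef :: "'a::field \<Rightarrow> 'a \<Rightarrow> 'a \<Rightarrow> 'a \<Rightarrow> nat \<Rightarrow> nat \<Rightarrow> 'a" where
"eef q us vs a n k = us * (q^n * inverse q^(2*k)) + vs * (q * q * inverse a) * (inverse q^n * q^(2*k))"

lemma pure1:
  fixes q :: "'a::field"
  assumes "q \<noteq> 0" "a \<noteq> 0" "Y \<noteq> 0" "Z \<noteq> 0"
  shows "(us*(Y*Z)*(G*inverse Y^2) + vs*(q*q*inverse a)*(inverse Y*inverse Z)*G) *
         (u*(inverse q*a)*(inverse Y*inverse Z)*G + v*q*(Y*Z)*(G*inverse Y^2))
       = (G * inverse Y)^2 * (u*us*a*inverse q + v*vs*q^3*inverse a + ((u*vs)*q*inverse Z^2 + (v*us)*q*Z^2))"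
  using assms by (simp add: field_simps power2_eq_square power3_eq_cube)

lemma alg:
  fixes q :: "'a::field"
  assumes q: "q \<noteq> 0" and a: "a \<noteq> 0" and qq: "q - inverse q \<noteq> 0"
   and h1: "u*vs = - b*bs*inverse q*(q - inverse q)^2" and h2: "v*us = - c*cs*inverse q*(q - inverse q)^2"
   and n: "n = j + e"
  shows "(\<Sum>k<Suc j. eef q us vs a n k) * (\<Sum>m<Suc j. rrf q u v a n m)
     = (q^(Suc j) - inverse q^(Suc j))^2 * ((u*us*a*inverse q + v*vs*q^3*inverse a)/(q - inverse q)^2
         - (b*bs*inverse q^(2*e) + c*cs*q^(2*e)))"
proof -
  define G where "G = (\<Sum>m<Suc j. q^(2*m))"
  have sr: "(\<Sum>m<Suc j. rrf q u v a n m) = u*(inverse q*a)*inverse q^n * G + v*q*q^n*(\<Sum>m<Suc j. inverse q^(2*m))"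
    unfolding G_def rrf_def by (simp add: sum.distrib sum_distrib_left mult_ac del: sum.lessThan_Suc)
  have se: "(\<Sum>k<Suc j. eef q us vs a n k) = us*q^n*(\<Sum>m<Suc j. inverse q^(2*m)) + vs*(q*q*inverse a)*inverse q^n*G"
    unfolding G_def eef_def by (simp add: sum.distrib sum_distrib_left mult_ac del: sum.lessThan_Suc)
  have H: "(\<Sum>m<Suc j. inverse q^(2*m)) = G * inverse (q^j)^2"
    unfolding G_def using geo2[OF q, of j] by (simp add: power_inverse power_mult[symmetric] mult.commute)
  have qn: "q^n = q^j * q^e" "inverse q^n = inverse (q^j) * inverse (q^e)"
    by (simp_all add: n power_add power_inverse)
  have "(\<Sum>k<Suc j. eef q us vs a n k) * (\<Sum>m<Suc j. rrf q u v a n m)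
     = (G * inverse (q^j))^2 * (u*us*a*inverse q + v*vs*q^3*inverse a + ((u*vs)*q*inverse (q^e)^2 + (v*us)*q*(q^e)^2))"
    unfolding sr se H qn by (rule pure1) (simp_all add: q a)
  also have "G * inverse (q^j) = (q^(Suc j) - inverse q^(Suc j)) / (q - inverse q)"
    using geo1[OF q, of j] qq unfolding G_def by (simp add: field_simps power_inverse)
  also have "(u*vs)*q*inverse (q^e)^2 + (v*us)*q*(q^e)^2 = -((q - inverse q)^2 * (b*bs*inverse q^(2*e) + c*cs*q^(2*e)))"
  proof -
    define Z where "Z = q^e"
    have Z: "Z \<noteq> 0" "q^(2*e) = Z^2" "inverse q^(2*e) = inverse Z^2"
      unfolding Z_def using q by (simp_all add: power_mult[symmetric] mult.commute power_inverse)
    show ?thesis unfolding h1 h2 Z_def[symmetric] Z(2,3) using q Z(1) by (simp add: field_simps)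
  qed
  finally show ?thesis using qq by (simp add: field_simps)
qed



lemma finS: "finite {w::bool list. length w = n}"
  using finite_lists_length_eq[of "UNIV::bool set" n] by simp

lemma S_Suc: "{w::bool list. length w = Suc n} = Cons True ` {w. length w = n} \<union> Cons False ` {w. length w = n}"
  apply (rule set_eqI)
  by (auto simp: length_Suc_conv)

lemma sum_S_Suc: "(\<Sum>w\<in>{w::bool list. length w = Suc n}. h w) =
   (\<Sum>w\<in>{w. length w = n}. h (True#w)) + (\<Sum>w\<in>{w. length w = n}. h (False#w))"
  apply (subst S_Suc)
  apply (subst sum.union_disjoint)
  using finS apply auto[3]
  by (simp add: sum.reindex)

lemma sum_S_0: "(\<Sum>w\<in>{w::bool list. length w = 0}. h w) = h []"
  by simp

lemma tmat_len: "length w' \<noteq> length as \<Longrightarrow> tmat q as g w w' = 0"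
proof (induction as arbitrary: w w' g)
  case Nil
  then show ?case by (cases w; cases w') auto
next
  case (Cons a as)
  then show ?case
    apply (cases w; cases w')
       apply auto
    done
qed

lemma tapp_len: "length w' \<noteq> length as \<Longrightarrow> tapp q as g f w' = 0"
  by (simp add: tapp_def tmat_len)

lemma tapp_Nil: "tapp q [] g f [] = (if g \<in> {K0g,K1g,K0ig,K1ig} then f [] else 0)"
  by (simp add: tapp_def)

lemma tapp_Cons: "tapp q (a#as) g f (b'#w') =
  (\<Sum>w\<in>{w. length w = length as}. f (True#w) * tmat q (a#as) g (True#w) (b'#w')) +
  (\<Sum>w\<in>{w. length w = length as}. f (False#w) * tmat q (a#as) g (False#w) (b'#w'))"
  unfolding tapp_def by (simp add: sum_S_Suc)

lemma tapp_smult: "tapp q as g (\<lambda>w. c * f w) w' = c * tapp q as g f w'"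
  unfolding tapp_def by (simp add: sum_distrib_left mult_ac)

lemma tapp_smult_fun: "tapp q as g (\<lambda>w. c * f w) = (\<lambda>w'. c * tapp q as g f w')"
  unfolding tapp_def by (simp add: sum_distrib_left mult_ac)

lemma tapp_zero_fun: "tapp q as g (\<lambda>w. 0) = (\<lambda>w'. 0)"
  unfolding tapp_def by simp

lemma tapp_zero: "tapp q as g (\<lambda>w. 0) w' = 0"
  unfolding tapp_def by simp

lemma tapp_add: "tapp q as g (\<lambda>w. f w + h w) w' = tapp q as g f w' + tapp q as g h w'"
  unfolding tapp_def by (simp add: sum.distrib algebra_simps)


lemma ifmul1: "(x::'a::semiring_1) * (if P then 1 else 0) = (if P then x else 0)" by simp
lemma ifmul2: "(c::'a::semiring_1) * (if P then x else 0) = (if P then c * x else 0)" by simp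

lemma ifmul3: "(if P then (0::'a::semiring_1) * x else 0) = 0" by simp

lemma K1_T: "tapp q (a#as) K1g f (True#w) = q * tapp q as K1g (\<lambda>w. f (True#w)) w"
  unfolding tapp_Cons by (simp add: sgl_def tapp_def sum_distrib_left mult_ac)
lemma K1_F: "tapp q (a#as) K1g f (False#w) = inverse q * tapp q as K1g (\<lambda>w. f (False#w)) w"
  unfolding tapp_Cons by (simp add: sgl_def tapp_def sum_distrib_left mult_ac)
lemma K0_T: "tapp q (a#as) K0g f (True#w) = inverse q * tapp q as K0g (\<lambda>w. f (True#w)) w"
  unfolding tapp_Cons by (simp add: sgl_def tapp_def sum_distrib_left mult_ac)
lemma K0_F: "tapp q (a#as) K0g f (False#w) = q * tapp q as K0g (\<lambda>w. f (False#w)) w"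
  unfolding tapp_Cons by (simp add: sgl_def tapp_def sum_distrib_left mult_ac)
lemma E0p_T: "tapp q (a#as) E0p f (True#w) = tapp q as E0p (\<lambda>w. f (True#w)) w"
  unfolding tapp_Cons by (simp add: sgl_def tapp_def sum_distrib_left mult_ac)
lemma E0p_F: "tapp q (a#as) E0p f (False#w) = inverse q * a * tapp q as K0g (\<lambda>w. f (True#w)) w + tapp q as E0p (\<lambda>w. f (False#w)) w"
  unfolding tapp_Cons by (simp add: sgl_def tapp_def sum_distrib_left mult_ac)
lemma E1p_T: "tapp q (a#as) E1p f (True#w) = tapp q as K1g (\<lambda>w. f (False#w)) w + tapp q as E1p (\<lambda>w. f (True#w)) w"
  unfolding tapp_Cons by (simp add: sgl_def tapp_def sum_distrib_left mult_ac)
lemma E1p_F: "tapp q (a#as) E1p f (False#w) = tapp q as E1p (\<lambda>w. f (False#w)) w"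
  unfolding tapp_Cons by (simp add: sgl_def tapp_def sum_distrib_left mult_ac)
lemma E1m_T: "tapp q (a#as) E1m f (True#w) = inverse q * tapp q as E1m (\<lambda>w. f (True#w)) w"
  unfolding tapp_Cons by (simp add: sgl_def tapp_def sum_distrib_left mult_ac)
lemma E1m_F: "tapp q (a#as) E1m f (False#w) = (if length w = length as then f (True#w) else 0) + q * tapp q as E1m (\<lambda>w. f (False#w)) w"
  unfolding tapp_Cons by (simp add: sgl_def tapp_def sum_distrib_left mult_ac finS ifmul1 ifmul2 ifmul3 sum.delta')
lemma E0m_T: "tapp q (a#as) E0m f (True#w) = (if length w = length as then q * inverse a * f (False#w) else 0) + q * tapp q as E0m (\<lambda>w. f (True#w)) w"
  unfolding tapp_Cons by (simp add: sgl_def tapp_def sum_distrib_left mult_ac finS ifmul1 ifmul2 ifmul3 sum.delta')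
lemma E0m_F: "tapp q (a#as) E0m f (False#w) = inverse q * tapp q as E0m (\<lambda>w. f (False#w)) w"
  unfolding tapp_Cons by (simp add: sgl_def tapp_def sum_distrib_left mult_ac)


lemma Rop_T: "q \<noteq> 0 \<Longrightarrow> Rop q u v (a#as) f (True#w) = Rop q u v as (\<lambda>w. f (True#w)) w"
  by (simp add: Rop_def E0p_T E1m_T K1_T tapp_smult)

lemma Rop_F: "q \<noteq> 0 \<Longrightarrow> Rop q u v (a#as) f (False#w) = Rop q u v as (\<lambda>w. f (False#w)) w
   + u * (inverse q * a) * tapp q as K0g (\<lambda>w. f (True#w)) w + v * q * tapp q as K1g (\<lambda>w. f (True#w)) w"
  by (cases "length w = length as")
    (simp_all add: Rop_def E0p_F E1m_F K1_T K1_F tapp_smult tapp_len algebra_simps)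

lemma Lop_T: "q \<noteq> 0 \<Longrightarrow> Lop q us vs (a#as) f (True#w) = Lop q us vs as (\<lambda>w. f (True#w)) w
   + us * tapp q as K1g (\<lambda>w. f (False#w)) w + vs * (q * q * inverse a) * tapp q as K0g (\<lambda>w. f (False#w)) w"
  by (cases "length w = length as")
    (simp_all add: Lop_def E1p_T E0m_T K0_T K0_F tapp_smult tapp_len algebra_simps)

lemma Lop_F: "q \<noteq> 0 \<Longrightarrow> Lop q us vs (a#as) f (False#w) = Lop q us vs as (\<lambda>w. f (False#w)) w"
  by (simp add: Lop_def E1p_F E0m_F K0_F tapp_smult)

lemma tapp_Nil_E: "g \<notin> {K0g,K1g,K0ig,K1ig} \<Longrightarrow> tapp q [] g f w = 0"
  by (cases w) (simp_all add: tapp_Nil tapp_len)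

lemma Rop_Nil: "Rop q u v [] f w = 0"
  by (simp add: Rop_def tapp_Nil_E)
lemma Lop_Nil: "Lop q u v [] f w = 0"
  by (simp add: Lop_def tapp_Nil_E)
lemma Rop_len: "length w \<noteq> length as \<Longrightarrow> Rop q u v as f w = 0"
  by (simp add: Rop_def tapp_len)
lemma Lop_len: "length w \<noteq> length as \<Longrightarrow> Lop q u v as f w = 0"
  by (simp add: Lop_def tapp_len)
lemma Rop_smult: "Rop q u v as (\<lambda>w. c * f w) w = c * Rop q u v as f w"
  by (simp add: Rop_def tapp_smult tapp_smult_fun algebra_simps)
lemma Lop_smult: "Lop q u v as (\<lambda>w. c * f w) w = c * Lop q u v as f w"
  by (simp add: Lop_def tapp_smult tapp_smult_fun algebra_simps)
lemma Rop_zero: "Rop q u v as (\<lambda>w. 0) w = 0"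
  by (simp add: Rop_def tapp_zero tapp_zero_fun)
lemma Lop_zero: "Lop q u v as (\<lambda>w. 0) w = 0"
  by (simp add: Lop_def tapp_zero tapp_zero_fun)

definition gr :: "'a::field list \<Rightarrow> int \<Rightarrow> (bool list \<Rightarrow> 'a) \<Rightarrow> bool" where
"gr as m f = (\<forall>w. f w \<noteq> 0 \<longrightarrow> length w = length as \<and> int (count_list w False) = m)"

lemma gr_Cons: "gr (a#as) m f \<longleftrightarrow> f [] = 0 \<and> gr as m (\<lambda>w. f (True#w)) \<and> gr as (m-1) (\<lambda>w. f (False#w))"
  unfolding gr_def
  apply (rule iffI)
   apply auto[1]
  apply clarify
  subgoal for w by (cases w) auto
  done

lemma gr_Nil: "gr [] m f \<longleftrightarrow> (\<forall>w. f w \<noteq> 0 \<longrightarrow> w = [] \<and> m = 0)"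
  unfolding gr_def by auto

lemma gr_neg: "gr as m f \<Longrightarrow> m < 0 \<Longrightarrow> f w = 0"
  unfolding gr_def by force

lemma count_le: "count_list w x \<le> length w"
  by (induction w) auto

lemma gr_big: "gr as m f \<Longrightarrow> m > int (length as) \<Longrightarrow> f w = 0"
  unfolding gr_def using count_le[of w False] by force

lemma gr_add: "gr as m f \<Longrightarrow> gr as m h \<Longrightarrow> gr as m (\<lambda>w. f w + h w)"
  unfolding gr_def by force

lemma gr_smult: "gr as m f \<Longrightarrow> gr as m (\<lambda>w. c * f w)"
  unfolding gr_def by force

lemma gr_zero: "gr as m (\<lambda>w. 0)"
  unfolding gr_def by force


lemma gr_neg_fun: "gr as m f \<Longrightarrow> m < 0 \<Longrightarrow> f = (\<lambda>w. 0)"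
  using gr_neg by fastforce

lemma K1eig: "q \<noteq> 0 \<Longrightarrow> gr as (int m) f \<Longrightarrow> tapp q as K1g f w = q^(length as) * inverse q^(2*m) * f w"
proof (induction as arbitrary: m f w)
  case Nil
  then show ?case
    by (cases w) (auto simp: tapp_Nil tapp_len gr_Nil)
next
  case (Cons a as)
  from Cons.prems(2) have g0: "f [] = 0" and gT: "gr as (int m) (\<lambda>w. f (True#w))"
    and gF: "gr as (int m - 1) (\<lambda>w. f (False#w))" by (auto simp: gr_Cons)
  show ?case
  proof (cases w)
    case Nil
    then show ?thesis by (simp add: tapp_len g0)
  next
    case (Cons b w')
    show ?thesis
    proof (cases b)
      case True
      then show ?thesis using Cons Cons.IH[OF Cons.prems(1) gT] by (simp add: K1_T)
    next
      case False
      show ?thesis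
      proof (cases m)
        case 0
        then have "(\<lambda>w. f (False#w)) = (\<lambda>w. 0)" using gF gr_neg_fun by force
        then have "f (False#w') = 0" by metis
        then show ?thesis using Cons False \<open>(\<lambda>w. f (False#w)) = (\<lambda>w. 0)\<close>
          by (simp add: K1_F tapp_zero_fun)
      next
        case (Suc m')
        have gF': "gr as (int m') (\<lambda>w. f (False#w))" using gF Suc by simp
        show ?thesis using Cons False Suc Cons.IH[OF Cons.prems(1) gF'] Cons.prems(1)
          by (simp add: K1_F field_simps)
      qed
    qed
  qed
qed

lemma K0eig: "q \<noteq> 0 \<Longrightarrow> gr as (int m) f \<Longrightarrow> tapp q as K0g f w = inverse q^(length as) * q^(2*m) * f w"
proof (induction as arbitrary: m f w)
  case Nil
  then show ?case
    by (cases w) (auto simp: tapp_Nil tapp_len gr_Nil)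
next
  case (Cons a as)
  from Cons.prems(2) have g0: "f [] = 0" and gT: "gr as (int m) (\<lambda>w. f (True#w))"
    and gF: "gr as (int m - 1) (\<lambda>w. f (False#w))" by (auto simp: gr_Cons)
  show ?case
  proof (cases w)
    case Nil
    then show ?thesis by (simp add: tapp_len g0)
  next
    case (Cons b w')
    show ?thesis
    proof (cases b)
      case True
      then show ?thesis using Cons Cons.IH[OF Cons.prems(1) gT] by (simp add: K0_T)
    next
      case False
      show ?thesis
      proof (cases m)
        case 0
        then have "(\<lambda>w. f (False#w)) = (\<lambda>w. 0)" using gF gr_neg_fun by force
        then have "f (False#w') = 0" by metis
        then show ?thesis using Cons False \<open>(\<lambda>w. f (False#w)) = (\<lambda>w. 0)\<close>
          by (simp add: K0_F tapp_zero_fun)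
      next
        case (Suc m')
        have gF': "gr as (int m') (\<lambda>w. f (False#w))" using gF Suc by simp
        show ?thesis using Cons False Suc Cons.IH[OF Cons.prems(1) gF'] Cons.prems(1)
          by (simp add: K0_F field_simps)
      qed
    qed
  qed
qed

lemma Kgr: "q \<noteq> 0 \<Longrightarrow> g \<in> {K0g, K1g} \<Longrightarrow> gr as m f \<Longrightarrow> gr as m (tapp q as g f)"
proof (cases "m < 0")
  case True
  assume "gr as m f"
  then have "f = (\<lambda>w. 0)" using True gr_neg_fun by blast
  then show ?thesis by (simp add: tapp_zero_fun gr_zero)
next
  case False
  assume q: "q \<noteq> 0" and g: "g \<in> {K0g, K1g}" and gf: "gr as m f"
  then obtain k where k: "m = int k" using False by (metis nonneg_int_cases not_less)
  show ?thesis
  proof (cases "g = K0g")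
    case True
    have "tapp q as g f = (\<lambda>w. (inverse q^(length as) * q^(2*k)) * f w)"
      using K0eig[OF q gf[unfolded k]] True by (auto simp: mult.assoc)
    then show ?thesis using gr_smult gf by metis
  next
    case False
    then have "g = K1g" using g by auto
    have "tapp q as g f = (\<lambda>w. (q^(length as) * inverse q^(2*k)) * f w)"
      using K1eig[OF q gf[unfolded k]] \<open>g = K1g\<close> by (auto simp: mult.assoc)
    then show ?thesis using gr_smult gf by metis
  qed
qed


lemma gr_add3: "gr as m f \<Longrightarrow> gr as m g \<Longrightarrow> gr as m h \<Longrightarrow> gr as m (\<lambda>w. f w + c * g w + d * h w)"
  unfolding gr_def by force

lemma Rgr: "q \<noteq> 0 \<Longrightarrow> gr as m f \<Longrightarrow> gr as (m+1) (Rop q u v as f)"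
proof (induction as arbitrary: m f)
  case Nil
  have "Rop q u v [] f = (\<lambda>w. 0)" by (rule ext) (simp add: Rop_Nil)
  then show ?case by (simp add: gr_zero)
next
  case (Cons a as)
  from Cons.prems(2) have gT: "gr as m (\<lambda>w. f (True#w))"
    and gF: "gr as (m - 1) (\<lambda>w. f (False#w))" by (auto simp: gr_Cons)
  have e1: "(\<lambda>w. Rop q u v (a#as) f (True#w)) = Rop q u v as (\<lambda>w. f (True#w))"
    by (rule ext) (simp add: Rop_T Cons.prems(1))
  have e2: "(\<lambda>w. Rop q u v (a#as) f (False#w)) = (\<lambda>w. Rop q u v as (\<lambda>w. f (False#w)) w
     + (u * (inverse q * a)) * tapp q as K0g (\<lambda>w. f (True#w)) w + (v * q) * tapp q as K1g (\<lambda>w. f (True#w)) w)"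
    by (rule ext) (simp add: Rop_F Cons.prems(1))
  have "gr as (m - 1 + 1) (Rop q u v as (\<lambda>w. f (False#w)))" using Cons.IH[OF Cons.prems(1) gF] .
  then have "gr as (m + 1 - 1) (\<lambda>w. Rop q u v (a#as) f (False#w))"
    unfolding e2 by simp (rule gr_add3; (rule Kgr[OF Cons.prems(1) _ gT])?; simp)
  moreover have "gr as (m+1) (\<lambda>w. Rop q u v (a#as) f (True#w))"
    unfolding e1 using Cons.IH[OF Cons.prems(1) gT] .
  ultimately show ?case by (simp add: gr_Cons Rop_len)
qed

lemma Lgr: "q \<noteq> 0 \<Longrightarrow> gr as m f \<Longrightarrow> gr as (m-1) (Lop q u v as f)"
proof (induction as arbitrary: m f)
  case Nil
  have "Lop q u v [] f = (\<lambda>w. 0)" by (rule ext) (simp add: Lop_Nil)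
  then show ?case by (simp add: gr_zero)
next
  case (Cons a as)
  from Cons.prems(2) have gT: "gr as m (\<lambda>w. f (True#w))"
    and gF: "gr as (m - 1) (\<lambda>w. f (False#w))" by (auto simp: gr_Cons)
  have e1: "(\<lambda>w. Lop q u v (a#as) f (True#w)) = (\<lambda>w. Lop q u v as (\<lambda>w. f (True#w)) w
     + u * tapp q as K1g (\<lambda>w. f (False#w)) w + (v * (q * q * inverse a)) * tapp q as K0g (\<lambda>w. f (False#w)) w)"
    by (rule ext) (simp add: Lop_T Cons.prems(1))
  have e2: "(\<lambda>w. Lop q u v (a#as) f (False#w)) = Lop q u v as (\<lambda>w. f (False#w))"
    by (rule ext) (simp add: Lop_F Cons.prems(1))
  have LT: "gr as (m - 1) (Lop q u v as (\<lambda>w. f (True#w)))" using Cons.IH[OF Cons.prems(1) gT] .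
  have "gr as (m - 1) (\<lambda>w. Lop q u v (a#as) f (True#w))"
    unfolding e1 by (rule gr_add3[OF LT]; rule Kgr[OF Cons.prems(1) _ gF]; simp)
  moreover have "gr as (m - 1 - 1) (\<lambda>w. Lop q u v (a#as) f (False#w))"
    unfolding e2 using Cons.IH[OF Cons.prems(1) gF] .
  ultimately show ?case by (simp add: gr_Cons Lop_len)
qed


lemma gr_xvec: "gr as 0 (xvec (length as))"
  unfolding gr_def xvec_def by (auto simp: count_list_0_iff)

lemma grRX: "q \<noteq> 0 \<Longrightarrow> gr as (int m) ((Rop q u v as ^^ m) (xvec (length as)))"
proof (induction m)
  case 0 then show ?case by (simp add: gr_xvec)
next
  case (Suc m) then show ?case using Rgr[OF Suc.prems Suc.IH[OF Suc.prems], of u v] by (simp add: add.commute)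
qed

lemma grLRX: "q \<noteq> 0 \<Longrightarrow> gr as (int m - int t) ((Lop q us vs as ^^ t) ((Rop q u v as ^^ m) (xvec (length as))))"
proof (induction t)
  case 0 then show ?case by (simp add: grRX)
next
  case (Suc t) then show ?case using Lgr[OF Suc.prems Suc.IH[OF Suc.prems]] by (simp add: algebra_simps)
qed

lemma RV:
  assumes q: "q \<noteq> 0"
  shows "(\<lambda>w. (Rop q u v (a#as) ^^ m) (xvec (Suc (length as))) (True#w)) = (Rop q u v as ^^ m) (xvec (length as))
    \<and> (\<lambda>w. (Rop q u v (a#as) ^^ m) (xvec (Suc (length as))) (False#w))
        = (\<lambda>w. (\<Sum>j<m. rrf q u v a (length as) j) * (Rop q u v as ^^ (m-1)) (xvec (length as)) w)"
proof (induction m)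
  case 0
  then show ?case by (auto simp: xvec_def)
next
  case (Suc m)
  let ?G = "(Rop q u v (a#as) ^^ m) (xvec (Suc (length as)))"
  let ?X = "xvec (length as)"
  let ?A = "\<Sum>j<m. rrf q u v a (length as) j"
  have T: "(\<lambda>w. ?G (True#w)) = (Rop q u v as ^^ m) ?X" and F: "(\<lambda>w. ?G (False#w)) = (\<lambda>w. ?A * (Rop q u v as ^^ (m-1)) ?X w)"
    using Suc.IH by auto
  have g: "gr as (int m) ((Rop q u v as ^^ m) ?X)" using grRX[OF q] .
  have "(\<lambda>w. (Rop q u v (a#as) ^^ Suc m) (xvec (Suc (length as))) (True#w)) = (\<lambda>w. Rop q u v as (\<lambda>w. ?G (True#w)) w)"
    by (simp add: Rop_T q)
  also have "\<dots> = (Rop q u v as ^^ Suc m) ?X" unfolding T by simp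
  finally have 1: "(\<lambda>w. (Rop q u v (a#as) ^^ Suc m) (xvec (Suc (length as))) (True#w)) = (Rop q u v as ^^ Suc m) ?X" .
  have RR: "Rop q u v as (\<lambda>w. ?A * (Rop q u v as ^^ (m-1)) ?X w) w = ?A * (Rop q u v as ^^ m) ?X w" for w
  proof (cases m)
    case 0 then show ?thesis by (simp add: Rop_zero)
  next
    case (Suc k) then show ?thesis by (simp add: Rop_smult)
  qed
  have "(\<lambda>w. (Rop q u v (a#as) ^^ Suc m) (xvec (Suc (length as))) (False#w))
     = (\<lambda>w. Rop q u v as (\<lambda>w. ?G (False#w)) w + u * (inverse q * a) * tapp q as K0g (\<lambda>w. ?G (True#w)) w
           + v * q * tapp q as K1g (\<lambda>w. ?G (True#w)) w)"
    by (simp add: Rop_F q)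
  also have "\<dots> = (\<lambda>w. (\<Sum>j<Suc m. rrf q u v a (length as) j) * (Rop q u v as ^^ (Suc m - 1)) ?X w)"
    unfolding T F
    apply (rule ext)
    apply (simp only: RR K0eig[OF q g] K1eig[OF q g] sum.lessThan_Suc diff_Suc_1)
    by (simp add: rrf_def algebra_simps)
  finally show ?case using 1 by simp
qed


lemma tapp_add_fun: "tapp q as g (\<lambda>w. f w + h w) = (\<lambda>w'. tapp q as g f w' + tapp q as g h w')"
  unfolding tapp_def by (rule ext) (simp add: sum.distrib algebra_simps)

lemma Lop_add: "Lop q us vs as (\<lambda>w. f w + h w) w = Lop q us vs as f w + Lop q us vs as h w"
  by (simp add: Lop_def tapp_add tapp_add_fun algebra_simps)

lemma LV:
  assumes q: "q \<noteq> 0"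
    and hT: "(\<lambda>w. G (True#w)) = P"
    and hF: "(\<lambda>w. G (False#w)) = (\<lambda>w. A * (Rop q u v as ^^ j) (xvec (length as)) w)"
    and t: "t \<le> Suc j"
  shows "(\<lambda>w. (Lop q us vs (a#as) ^^ t) G (False#w)) = (\<lambda>w. A * (Lop q us vs as ^^ t) ((Rop q u v as ^^ j) (xvec (length as))) w)
    \<and> (\<lambda>w. (Lop q us vs (a#as) ^^ t) G (True#w)) = (\<lambda>w. (Lop q us vs as ^^ t) P w
        + (\<Sum>s<t. eef q us vs a (length as) (j - s)) * A * (Lop q us vs as ^^ (t-1)) ((Rop q u v as ^^ j) (xvec (length as))) w)"
  using t
proof (induction t)
  case 0
  then show ?case using hT hF by simp
next
  case (Suc t)
  let ?Q = "(Rop q u v as ^^ j) (xvec (length as))"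
  let ?H = "(Lop q us vs (a#as) ^^ t) G"
  let ?S = "\<Sum>s<t. eef q us vs a (length as) (j - s)"
  have tj: "t \<le> j" using Suc.prems by simp
  have F: "(\<lambda>w. ?H (False#w)) = (\<lambda>w. A * (Lop q us vs as ^^ t) ?Q w)"
    and T: "(\<lambda>w. ?H (True#w)) = (\<lambda>w. (Lop q us vs as ^^ t) P w + ?S * A * (Lop q us vs as ^^ (t-1)) ?Q w)"
    using Suc.IH Suc.prems by auto
  have g: "gr as (int (j - t)) ((Lop q us vs as ^^ t) ?Q)"
    using grLRX[OF q, where m=j and t=t and us=us and vs=vs and as=as and u=u and v=v] tj by (simp add: of_nat_diff)
  have 1: "(\<lambda>w. (Lop q us vs (a#as) ^^ Suc t) G (False#w)) = (\<lambda>w. A * (Lop q us vs as ^^ Suc t) ?Q w)"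
    apply (rule ext)
    apply (simp add: Lop_F q)
    apply (subst F)
    by (simp add: Lop_smult)
  have LL: "Lop q us vs as (\<lambda>w. ?S * A * (Lop q us vs as ^^ (t-1)) ?Q w) w = ?S * A * (Lop q us vs as ^^ t) ?Q w" for w
  proof (cases t)
    case 0 then show ?thesis by (simp add: Lop_zero)
  next
    case (Suc k) then show ?thesis using Lop_smult[of q us vs as "?S * A" "(Lop q us vs as ^^ k) ?Q" w] by simp
  qed
  have "(\<lambda>w. (Lop q us vs (a#as) ^^ Suc t) G (True#w)) = (\<lambda>w. Lop q us vs as (\<lambda>w. ?H (True#w)) w
      + us * tapp q as K1g (\<lambda>w. ?H (False#w)) w + vs * (q * q * inverse a) * tapp q as K0g (\<lambda>w. ?H (False#w)) w)"
    by (rule ext) (simp add: Lop_T q)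
  also have "\<dots> = (\<lambda>w. (Lop q us vs as ^^ Suc t) P w
        + (\<Sum>s<Suc t. eef q us vs a (length as) (j - s)) * A * (Lop q us vs as ^^ (Suc t - 1)) ?Q w)"
    unfolding T F
    apply (rule ext)
    apply (simp only: Lop_add LL tapp_smult K1eig[OF q g] K0eig[OF q g] sum.lessThan_Suc diff_Suc_1)
    by (simp add: eef_def algebra_simps)
  finally show ?case using 1 by simp
qed


lemma zeta_rec:
  assumes q: "q \<noteq> 0"
  shows "zeta q u v us vs (a#as) (Suc j) = zeta q u v us vs as (Suc j)
     + (\<Sum>s<Suc j. eef q us vs a (length as) (j - s)) * (\<Sum>m<Suc j. rrf q u v a (length as) m) * zeta q u v us vs as j"
proof -
  let ?G = "(Rop q u v (a#as) ^^ Suc j) (xvec (Suc (length as)))"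
  have hT: "(\<lambda>w. ?G (True#w)) = (Rop q u v as ^^ Suc j) (xvec (length as))"
    and hF: "(\<lambda>w. ?G (False#w)) = (\<lambda>w. (\<Sum>m<Suc j. rrf q u v a (length as) m) * (Rop q u v as ^^ j) (xvec (length as)) w)"
    using RV[OF q, where m="Suc j" and u=u and v=v and a=a and as=as] by auto
  have "(\<lambda>w. (Lop q us vs (a#as) ^^ Suc j) ?G (True#w)) = (\<lambda>w. (Lop q us vs as ^^ Suc j) ((Rop q u v as ^^ Suc j) (xvec (length as))) w
        + (\<Sum>s<Suc j. eef q us vs a (length as) (j - s)) * (\<Sum>m<Suc j. rrf q u v a (length as) m) * (Lop q us vs as ^^ (Suc j - 1)) ((Rop q u v as ^^ j) (xvec (length as))) w)"
    using LV[OF q hT hF, where t="Suc j" and us=us and vs=vs] by auto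
  from fun_cong[OF this, of "replicate (length as) True"]
  show ?thesis unfolding zeta_def by simp
qed

lemma zeta_0: "zeta q u v us vs as 0 = 1"
  by (simp add: zeta_def xvec_def)

lemma Lop_pow_zero: "(Lop q us vs as ^^ k) (\<lambda>w. 0) = (\<lambda>w. 0)"
  by (induction k) (auto simp: Lop_zero)

lemma zeta_big:
  assumes q: "q \<noteq> 0"
  shows "zeta q u v us vs as (Suc (length as)) = 0"
proof -
  have "(Rop q u v as ^^ Suc (length as)) (xvec (length as)) = (\<lambda>w. 0)"
    using gr_big[OF grRX[OF q, where m="Suc (length as)" and as=as and u=u and v=v]] by (intro ext) simp
  then show ?thesis unfolding zeta_def by (simp only: Lop_pow_zero)
qed



lemma divh: "(X::'a::field) \<noteq> 0 \<Longrightarrow> (Z1 + X^2*M*Z0)/(P*X^2) = Z1/(P*X^2) + M*(Z0/P)"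
  by (cases "P = 0") (simp_all add: field_simps)

lemma sigma_rec:
  fixes q :: "'a::field"
  assumes q: "q \<noteq> 0" and a: "a \<noteq> 0" and qq: "q - inverse q \<noteq> 0"
   and h1: "u*vs = - b*bs*inverse q*(q - inverse q)^2" and h2: "v*us = - c*cs*inverse q*(q - inverse q)^2"
   and j: "j \<le> length as" and nz: "q^(Suc j) - inverse q^(Suc j) \<noteq> 0"
  shows "sigma q u v us vs (a#as) (Suc j) = sigma q u v us vs as (Suc j)
     + ((u*us*a*inverse q + v*vs*q^3*inverse a)/(q - inverse q)^2
         - (b*bs*inverse q^(2*(length as - j)) + c*cs*q^(2*(length as - j)))) * sigma q u v us vs as j"
proof -
  let ?M = "(u*us*a*inverse q + v*vs*q^3*inverse a)/(q - inverse q)^2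
         - (b*bs*inverse q^(2*(length as - j)) + c*cs*q^(2*(length as - j)))"
  let ?X = "q^(Suc j) - inverse q^(Suc j)"
  let ?P = "\<Prod>k=1..j. (q ^ k - inverse q ^ k)^2"
  have es: "(\<Sum>s<Suc j. eef q us vs a (length as) (j - s)) = (\<Sum>k<Suc j. eef q us vs a (length as) k)"
    using sum.nat_diff_reindex[of "eef q us vs a (length as)" "Suc j"] by simp
  have al: "(\<Sum>k<Suc j. eef q us vs a (length as) k) * (\<Sum>m<Suc j. rrf q u v a (length as) m) = ?X^2 * ?M"
    by (rule alg[OF q a qq h1 h2]) (use j in simp)
  have z: "zeta q u v us vs (a#as) (Suc j) = zeta q u v us vs as (Suc j) + ?X^2 * ?M * zeta q u v us vs as j"
    using zeta_rec[OF q, of u v us vs a as j] es al by simp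
  have pr: "(\<Prod>k=1..Suc j. (q ^ k - inverse q ^ k)^2) = ?P * ?X^2" by simp
  show ?thesis
    unfolding sigma_def pr z by (rule divh[OF nz])
qed



lemma term_id: "smult x (F * [:th, -1:]) + smult ((K - th) * x) F = [:K, -1:] * smult x (F::'a::field poly)"
proof -
  have "[:K, -1:] = [:th, -1:] + smult (K - th) 1" by (simp add: one_pCons)
  then show ?thesis by (simp add: algebra_simps smult_add_left smult_add_right smult_pCons smult_diff_left)
qed

lemma poly_main:
  fixes s t :: "nat \<Rightarrow> 'a::field"
  assumes t0: "t 0 = 1" and s0: "s 0 = 1" and sbig: "s (Suc n) = 0"
   and rec: "\<And>i. i \<le> n \<Longrightarrow> t (Suc n - i) = s (Suc n - i) + (K - (b*bs*inverse q^(2*i) + c*cs*q^(2*i))) * s (n - i)"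
  shows "(\<Sum>i\<le>Suc n. smult (t (Suc n - i)) (\<Prod>j<i. fpol q b c bs cs j))
     = [:K, -1:] * (\<Sum>i\<le>n. smult (s (n - i)) (\<Prod>j<i. fpol q b c bs cs j))"
proof -
  let ?F = "\<lambda>i. \<Prod>j<i. fpol q b c bs cs j"
  let ?th = "\<lambda>i::nat. b*bs*inverse q^(2*i) + c*cs*q^(2*i)"
  have "(\<Sum>i\<le>Suc n. smult (t (Suc n - i)) (?F i)) = (\<Sum>i\<le>n. smult (t (Suc n - i)) (?F i)) + ?F (Suc n)"
    using t0 by simp
  also have "(\<Sum>i\<le>n. smult (t (Suc n - i)) (?F i)) = (\<Sum>i\<le>n. smult (s (Suc n - i)) (?F i)) + (\<Sum>i\<le>n. smult ((K - ?th i) * s (n - i)) (?F i))"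
    by (simp add: rec smult_add_left sum.distrib del: sum.atMost_Suc)
  also have "(\<Sum>i\<le>n. smult (s (Suc n - i)) (?F i)) + (\<Sum>i\<le>n. smult ((K - ?th i) * s (n - i)) (?F i)) + ?F (Suc n)
      = (\<Sum>i\<le>Suc n. smult (s (Suc n - i)) (?F i)) + (\<Sum>i\<le>n. smult ((K - ?th i) * s (n - i)) (?F i))"
    using s0 by simp
  also have "(\<Sum>i\<le>Suc n. smult (s (Suc n - i)) (?F i)) = (\<Sum>i\<le>n. smult (s (n - i)) (?F i * [:?th i, -1:]))"
    by (subst sum.atMost_Suc_shift) (simp add: sbig fpol_def del: sum.atMost_Suc)
  also have "(\<Sum>i\<le>n. smult (s (n - i)) (?F i * [:?th i, -1:])) + (\<Sum>i\<le>n. smult ((K - ?th i) * s (n - i)) (?F i))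
      = (\<Sum>i\<le>n. [:K, -1:] * smult (s (n - i)) (?F i))"
    by (simp only: sum.distrib[symmetric] term_id)
  also have "\<dots> = [:K, -1:] * (\<Sum>i\<le>n. smult (s (n - i)) (?F i))"
    by (simp add: sum_distrib_left del: sum.atMost_Suc)
  finally show ?thesis .
qed


lemma sigma_0: "sigma q u v us vs as 0 = 1"
  by (simp add: sigma_def zeta_0)

lemma sigma_big: "q \<noteq> 0 \<Longrightarrow> sigma q u v us vs as (Suc (length as)) = 0"
  by (simp add: sigma_def zeta_big)

lemma feas_nz: "feasible q d \<Longrightarrow> q \<noteq> 0 \<Longrightarrow> 1 \<le> i \<Longrightarrow> i \<le> d \<Longrightarrow> q^i - inverse q^i \<noteq> 0"
proof
  assume f: "feasible q d" and q: "q \<noteq> 0" and i: "1 \<le> i" "i \<le> d" and e: "q^i - inverse q^i = 0"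
  then have "q^i * q^i = 1" by (simp add: power_inverse field_simps)
  then have "q^(2*i) = 1" by (simp add: mult_2 power_add)
  with f i show False unfolding feasible_def by auto
qed

lemma sgn_lem: "smult ((-1)^Suc n) ([:K, -1:] * S) = [:-K, 1:] * smult ((-1)^n) (S::'a::field poly)"
proof -
  have e: "smult (-1) [:K, -1:] = [:-K, 1:]" by simp
  have "smult ((-1)^Suc n) ([:K, -1:] * S) = smult ((-1)^n) (smult (-1) ([:K, -1:] * S))"
    by (metis power_Suc smult_smult mult.commute)
  also have "\<dots> = smult ((-1)^n) ([:-K, 1:] * S)" by (simp only: mult_smult_left[symmetric] e)
  also have "\<dots> = [:-K, 1:] * smult ((-1)^n) S" by (simp only: mult_smult_right)
  finally show ?thesis .
qed

lemma drinfeld_Cons: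
  fixes q :: "'a::field"
  assumes q: "q \<noteq> 0" and a: "a \<noteq> 0" and q2: "q^2 \<noteq> 1"
   and h1: "u * vs = - b * bs * inverse q * (q - inverse q)^2" and h2: "v * us = - c * cs * inverse q * (q - inverse q)^2"
   and feas: "feasible q (Suc (length as))"
  shows "drinfeld q b c bs cs u v us vs (a#as) = [:-((u*us*a*inverse q + v*vs*q^3*inverse a)/(q - inverse q)^2), 1:] * drinfeld q b c bs cs u v us vs as"
proof -
  let ?K = "(u*us*a*inverse q + v*vs*q^3*inverse a)/(q - inverse q)^2"
  let ?n = "length as"
  have qq: "q - inverse q \<noteq> 0"
  proof
    assume "q - inverse q = 0"
    then have "q * q = 1" using q by (simp add: field_simps)
    then show False using q2 by (simp add: power2_eq_square)
  qed
  have main: "(\<Sum>i\<le>Suc ?n. smult (sigma q u v us vs (a#as) (Suc ?n - i)) (\<Prod>j<i. fpol q b c bs cs j))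
     = [:?K, -1:] * (\<Sum>i\<le>?n. smult (sigma q u v us vs as (?n - i)) (\<Prod>j<i. fpol q b c bs cs j))"
  proof (rule poly_main)
    show "sigma q u v us vs (a#as) 0 = 1" "sigma q u v us vs as 0 = 1" by (simp_all add: sigma_0)
    show "sigma q u v us vs as (Suc ?n) = 0" by (rule sigma_big[OF q])
    fix i assume i: "i \<le> ?n"
    have nz: "q^(Suc (?n - i)) - inverse q^(Suc (?n - i)) \<noteq> 0"
      by (rule feas_nz[OF feas q]) (use i in auto)
    have "sigma q u v us vs (a#as) (Suc (?n - i)) = sigma q u v us vs as (Suc (?n - i))
     + (?K - (b*bs*inverse q^(2*(?n - (?n - i))) + c*cs*q^(2*(?n - (?n - i))))) * sigma q u v us vs as (?n - i)"
      by (rule sigma_rec[OF q a qq h1 h2 _ nz]) simp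
    moreover have "Suc ?n - i = Suc (?n - i)" "?n - (?n - i) = i" using i by auto
    ultimately show "sigma q u v us vs (a#as) (Suc ?n - i) = sigma q u v us vs as (Suc ?n - i)
     + (?K - (b*bs*inverse q^(2*i) + c*cs*q^(2*i))) * sigma q u v us vs as (?n - i)" by simp
  qed
  have len: "length (a#as) = Suc ?n" by simp
  show ?thesis
    unfolding drinfeld_def atLeast0AtMost len main by (rule sgn_lem)
qed

lemma drinfeld_Nil: "drinfeld q b c bs cs u v us vs [] = 1"
  by (simp add: drinfeld_def sigma_0)

lemma drinfeld_prod:
  fixes q :: "'a::field"
  assumes q: "q \<noteq> 0" and q2: "q^2 \<noteq> 1"
   and h1: "u * vs = - b * bs * inverse q * (q - inverse q)^2" and h2: "v * us = - c * cs * inverse q * (q - inverse q)^2"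
  shows "(\<forall>a\<in>set as. a \<noteq> 0) \<Longrightarrow> feasible q (length as) \<Longrightarrow>
     drinfeld q b c bs cs u v us vs as = (\<Prod>i<length as. drinfeld q b c bs cs u v us vs [as ! i])"
proof (induction as)
  case Nil
  then show ?case by (simp add: drinfeld_Nil)
next
  case (Cons a as)
  have fe: "feasible q (length as)" using Cons.prems(2) unfolding feasible_def by auto
  have f1: "feasible q (Suc (length ([]::'a list)))" using q2 unfolding feasible_def by auto
  have a: "a \<noteq> 0" using Cons.prems(1) by simp
  have "drinfeld q b c bs cs u v us vs [a] = [:-((u*us*a*inverse q + v*vs*q^3*inverse a)/(q - inverse q)^2), 1:]"
    using drinfeld_Cons[OF q a q2 h1 h2 f1] by (simp add: drinfeld_Nil)
  moreover have "drinfeld q b c bs cs u v us vs (a#as) = [:-((u*us*a*inverse q + v*vs*q^3*inverse a)/(q - inverse q)^2), 1:] * drinfeld q b c bs cs u v us vs as"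
    using drinfeld_Cons[OF q a q2 h1 h2] Cons.prems(2) by simp
  ultimately show ?case using Cons.IH[OF _ fe] Cons.prems(1)
    by (simp add: prod.lessThan_Suc_shift del: prod.lessThan_Suc)
qed

theorem proposition7p13:
  fixes q b c bs cs u v us vs :: "'a::field" and as :: "'a list"
  assumes alg_closed: "\<forall>p :: 'a poly. degree p > 0 \<longrightarrow> (\<exists>x. poly p x = 0)"
    and "q \<noteq> 0" and "q^2 \<noteq> 1"
    and "b \<noteq> 0" and "c \<noteq> 0" and "bs \<noteq> 0" and "cs \<noteq> 0"
    and "u * vs = - b * bs * inverse q * (q - inverse q)^2"
    and "v * us = - c * cs * inverse q * (q - inverse q)^2"
    and "\<forall>a\<in>set as. a \<noteq> 0"
    and "feasible q (length as)"
  shows "drinfeld q b c bs cs u v us vs as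
           = (\<Prod>i<length as. drinfeld q b c bs cs u v us vs [as ! i])"
  by (rule drinfeld_prod[OF assms(2,3,8,9,10,11)])

end
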